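(* Let $\Gamma$ be a strongly connected digraph on $[n]$, let $S=S(\Gamma)$ be its total sandpile group, and let $S_i=S_i(\Gamma)$ for $i\in[n]$ be its sandpile groups at the vertices. Then: (1) for every $i$ there is a (canonical) surjection $S_i\to S$; (2) $|S|=\gcd\{|S_i|: i\in[n]\}$; (3) if $G$ is a finite abelian group such that for every $i\in[n]$ there is a surjection $S_i\to G$, then there is a surjection $S\to G$.
   Context: Digraphs may have multiple edges (and loops). $\deg(i,j)$ is the number of edges from $i$ to $j$, and $\mathrm{outdeg}(i)$ is the number of edges leaving $i$. A digraph is strongly connected if there is a directed path from every vertex to every other vertex. The Laplacian $L$ is the $n\times n$ integer matrix with $L_{ij}=-\deg(j,i)$ for $i\ne j$ and $L_{jj}=\mathrm{outdeg}(j)-\deg(j,j)$, so its columns sum to $0$. $L_i$ is the $(n-1)\times(n-1)$ matrix obtained from $L$ by deleting row $i$ and column $i$. The sandpile group at vertex $i$ is $S_i(\Gamma)=\mathbb{Z}^{n-1}/L_i\mathbb{Z}^{n-1}$; it is finite when $\Gamma$ is strongly connected. The total sandpile group is $S(\Gamma)=\mathbb{Z}^n_0/L\mathbb{Z}^n$, where $\mathbb{Z}^n_0$ is the subgroup of $\mathbb{Z}^n$ of vectors with entry sum $0$. *)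

theory Defs
  imports "HOL-Algebra.Coset"
begin

text \<open>A digraph with multiple edges and loops on the vertex set {0..<n} (standing for [n])
  is given by its edge-count function deg, where deg i j is the number of edges from i to j.
  Only the values deg i j with i, j < n are relevant.\<close>

definition outdeg :: "nat \<Rightarrow> (nat \<Rightarrow> nat \<Rightarrow> nat) \<Rightarrow> nat \<Rightarrow> nat" where
  "outdeg n deg i = (\<Sum>j<n. deg i j)"

definition edge_rel :: "nat \<Rightarrow> (nat \<Rightarrow> nat \<Rightarrow> nat) \<Rightarrow> (nat \<times> nat) set" where
  "edge_rel n deg = {(i, j). i < n \<and> j < n \<and> deg i j > 0}"

definition strongly_connected :: "nat \<Rightarrow> (nat \<Rightarrow> nat \<Rightarrow> nat) \<Rightarrow> bool" where
  "strongly_connected n deg \<longleftrightarrow> (\<forall>i<n. \<forall>j<n. (i, j) \<in> (edge_rel n deg)\<^sup>*)"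

definition laplacian :: "nat \<Rightarrow> (nat \<Rightarrow> nat \<Rightarrow> nat) \<Rightarrow> nat \<Rightarrow> nat \<Rightarrow> int" where
  "laplacian n deg i j =
     (if i = j then int (outdeg n deg j) - int (deg j j) else - int (deg j i))"

definition vecs :: "nat set \<Rightarrow> (nat \<Rightarrow> int) set" where
  "vecs A = {v. \<forall>k. k \<notin> A \<longrightarrow> v k = 0}"

definition vec_group :: "(nat \<Rightarrow> int) set \<Rightarrow> (nat \<Rightarrow> int) monoid" where
  "vec_group V = \<lparr>carrier = V, mult = (\<lambda>u v k. u k + v k), one = (\<lambda>k. 0)\<rparr>"

definition lap_apply :: "nat \<Rightarrow> (nat \<Rightarrow> nat \<Rightarrow> nat) \<Rightarrow> (nat \<Rightarrow> int) \<Rightarrow> (nat \<Rightarrow> int)" where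
  "lap_apply n deg x = (\<lambda>k. if k < n then (\<Sum>j<n. laplacian n deg k j * x j) else 0)"

text \<open>Reduced Laplacian L_i (row and column i deleted), acting on Z^([n]-{i}) \<cong> Z^(n-1).\<close>
definition red_lap_apply :: "nat \<Rightarrow> (nat \<Rightarrow> nat \<Rightarrow> nat) \<Rightarrow> nat \<Rightarrow> (nat \<Rightarrow> int) \<Rightarrow> (nat \<Rightarrow> int)" where
  "red_lap_apply n deg i x =
     (\<lambda>k. if k < n \<and> k \<noteq> i then (\<Sum>j\<in>{..<n} - {i}. laplacian n deg k j * x j) else 0)"

definition zero_sum_vecs :: "nat \<Rightarrow> (nat \<Rightarrow> int) set" where
  "zero_sum_vecs n = {v \<in> vecs {..<n}. (\<Sum>k<n. v k) = 0}"

definition total_sandpile :: "nat \<Rightarrow> (nat \<Rightarrow> nat \<Rightarrow> nat) \<Rightarrow> (nat \<Rightarrow> int) set monoid" where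
  "total_sandpile n deg =
     vec_group (zero_sum_vecs n) Mod (lap_apply n deg ` vecs {..<n})"

definition sandpile_at :: "nat \<Rightarrow> (nat \<Rightarrow> nat \<Rightarrow> nat) \<Rightarrow> nat \<Rightarrow> (nat \<Rightarrow> int) set monoid" where
  "sandpile_at n deg i =
     vec_group (vecs ({..<n} - {i})) Mod (red_lap_apply n deg i ` vecs ({..<n} - {i}))"

definition surj_hom :: "('a, 'c) monoid_scheme \<Rightarrow> ('b, 'd) monoid_scheme \<Rightarrow> ('a \<Rightarrow> 'b) \<Rightarrow> bool" where
  "surj_hom G H h \<longleftrightarrow> h \<in> hom G H \<and> h ` carrier G = carrier H"

end

theory Submission
  imports Defs "HOL-Algebra.Multiplicative_Group" "Jordan_Normal_Form.Determinant" "HOL-Computational_Algebra.Primes"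
begin

definition lat :: "(nat \<Rightarrow> int) set \<Rightarrow> bool" where
  "lat H \<longleftrightarrow> (\<lambda>k. 0) \<in> H \<and> (\<forall>u\<in>H. \<forall>v\<in>H. (\<lambda>k. u k + v k) \<in> H) \<and> (\<forall>u\<in>H. (\<lambda>k. - u k) \<in> H)"

lemma vg_simps[simp]:
  "carrier (vec_group V) = V" "u \<otimes>\<^bsub>vec_group V\<^esub> v = (\<lambda>k. u k + v k)" "\<one>\<^bsub>vec_group V\<^esub> = (\<lambda>k. 0)"
  by (auto simp: vec_group_def)

lemma lat_comm_group: assumes "lat V" shows "comm_group (vec_group V)"
proof (rule comm_groupI)
  show "\<And>x. x \<in> carrier (vec_group V) \<Longrightarrow> \<exists>y\<in>carrier (vec_group V). y \<otimes>\<^bsub>vec_group V\<^esub> x = \<one>\<^bsub>vec_group V\<^esub>"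
    using assms unfolding lat_def by (auto intro!: bexI[of _ "\<lambda>k. - _ k"])
qed (use assms in \<open>auto simp: lat_def algebra_simps\<close>)

lemma lat_group: "lat V \<Longrightarrow> group (vec_group V)"
  using lat_comm_group comm_group.axioms(2) by blast

lemma vg_inv: assumes "lat V" "u \<in> V" shows "inv\<^bsub>vec_group V\<^esub> u = (\<lambda>k. - u k)"
proof -
  interpret group "vec_group V" using lat_group[OF assms(1)] .
  show ?thesis using assms by (intro inv_equality) (auto simp: lat_def)
qed

lemma lat_subgroup: assumes "lat V" "lat H" "H \<subseteq> V" shows "subgroup H (vec_group V)"
proof -
  interpret group "vec_group V" using lat_group[OF assms(1)] .
  show ?thesis
  proof (rule subgroupI)
    show "\<And>a. a \<in> H \<Longrightarrow> inv\<^bsub>vec_group V\<^esub> a \<in> H" using assms vg_inv[OF assms(1)] by (auto simp: lat_def)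
  qed (use assms in \<open>auto simp: lat_def\<close>)
qed

lemma lat_normal: assumes "lat V" "lat H" "H \<subseteq> V" shows "H \<lhd> vec_group V"
  using comm_group.subgroup_imp_normal[OF lat_comm_group[OF assms(1)] lat_subgroup[OF assms]] .

lemma lat_Mod_comm: assumes "lat V" "lat H" "H \<subseteq> V" shows "comm_group (vec_group V Mod H)"
  using comm_group.abelian_FactGroup[OF lat_comm_group[OF assms(1)] lat_subgroup[OF assms]] .

lemma lat_vecs: "lat (vecs A)" by (auto simp: lat_def vecs_def)

lemma lat_zs: "lat (zero_sum_vecs n)"
  by (auto simp: lat_def zero_sum_vecs_def vecs_def sum.distrib sum_negf)

lemma lat_image: assumes "lat V" "\<And>u v. u \<in> V \<Longrightarrow> v \<in> V \<Longrightarrow> f (\<lambda>k. u k + v k) = (\<lambda>k. f u k + f v k)"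
  "\<And>u. u \<in> V \<Longrightarrow> f (\<lambda>k. - u k) = (\<lambda>k. - f u k)" "f (\<lambda>k. 0) = (\<lambda>k. 0)"
  shows "lat (f ` V)"
  unfolding lat_def
proof (intro conjI ballI)
  have "(\<lambda>k. 0) \<in> V" using assms(1) unfolding lat_def by blast
  then show "(\<lambda>k. 0) \<in> f ` V" using assms(4) by (intro rev_image_eqI) auto
next
  fix a b assume "a \<in> f ` V" "b \<in> f ` V"
  then obtain u v where uv: "u \<in> V" "v \<in> V" "a = f u" "b = f v" by auto
  have "(\<lambda>k. u k + v k) \<in> V" using assms(1) uv unfolding lat_def by blast
  then show "(\<lambda>k. a k + b k) \<in> f ` V" using assms(2)[OF uv(1,2)] uv by (intro rev_image_eqI) auto
next
  fix a assume "a \<in> f ` V"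
  then obtain u where uv: "u \<in> V" "a = f u" by auto
  have "(\<lambda>k. - u k) \<in> V" using assms(1) uv unfolding lat_def by blast
  then show "(\<lambda>k. - a k) \<in> f ` V" using assms(3)[OF uv(1)] uv by (intro rev_image_eqI) auto
qed

lemma rcos_vg: "H #>\<^bsub>vec_group V\<^esub> x = (\<lambda>h k. h k + x k) ` H"
  by (auto simp: r_coset_def)

lemma lat_zero: "lat H \<Longrightarrow> (\<lambda>k. 0) \<in> H" unfolding lat_def by blast
lemma lat_add: "lat H \<Longrightarrow> u \<in> H \<Longrightarrow> v \<in> H \<Longrightarrow> (\<lambda>k. u k + v k) \<in> H" unfolding lat_def by blast
lemma lat_neg: "lat H \<Longrightarrow> u \<in> H \<Longrightarrow> (\<lambda>k. - u k) \<in> H" unfolding lat_def by blast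
lemma lat_diff: "lat H \<Longrightarrow> u \<in> H \<Longrightarrow> v \<in> H \<Longrightarrow> (\<lambda>k. u k - v k) \<in> H"
  using lat_add[of H u "\<lambda>k. - v k"] lat_neg[of H v] by simp

lemma rcos_eqI: assumes "lat H" "(\<lambda>k. x k - y k) \<in> H"
  shows "H #>\<^bsub>vec_group V\<^esub> x = H #>\<^bsub>vec_group V\<^esub> y"
proof -
  have 1: "(\<lambda>k. h k + x k) \<in> (\<lambda>h k. h k + y k) ` H" if "h \<in> H" for h
    using lat_add[OF assms(1) that assms(2)] by (intro rev_image_eqI) auto
  have 2: "(\<lambda>k. h k + y k) \<in> (\<lambda>h k. h k + x k) ` H" if "h \<in> H" for h
    using lat_diff[OF assms(1) that assms(2)] by (intro rev_image_eqI) auto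
  show ?thesis unfolding rcos_vg using 1 2 by blast
qed

lemma rcos_eqD: assumes "lat H" "H #>\<^bsub>vec_group V\<^esub> x = H #>\<^bsub>vec_group V\<^esub> y"
  shows "(\<lambda>k. x k - y k) \<in> H"
proof -
  have "x \<in> H #>\<^bsub>vec_group V\<^esub> x" unfolding rcos_vg using lat_zero[OF assms(1)]
    by (intro rev_image_eqI) auto
  then obtain h where "h \<in> H" "x = (\<lambda>k. h k + y k)" using assms(2) unfolding rcos_vg by auto
  then show ?thesis by simp
qed


definition phi :: "nat \<Rightarrow> nat \<Rightarrow> (nat\<Rightarrow>int) \<Rightarrow> (nat\<Rightarrow>int)" where
  "phi n i x = (\<lambda>k. if k = i then - (\<Sum>j<n. x j) else x k)"
definition wv :: "nat \<Rightarrow> (nat\<Rightarrow>nat\<Rightarrow>nat) \<Rightarrow> nat \<Rightarrow> (nat\<Rightarrow>int)" where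
  "wv n dg i = (\<lambda>k. if k < n \<and> k \<noteq> i then laplacian n dg k i else 0)"

lemma colsum: assumes "j < n" shows "(\<Sum>k<n. laplacian n dg k j) = 0"
proof -
  have "(\<Sum>k<n. laplacian n dg k j) = laplacian n dg j j + (\<Sum>k\<in>{..<n}-{j}. laplacian n dg k j)"
    using assms by (simp add: sum.remove)
  also have "(\<Sum>k\<in>{..<n}-{j}. laplacian n dg k j) = - (\<Sum>k\<in>{..<n}-{j}. int (dg j k))"
    by (simp add: laplacian_def sum_negf)
  also have "int (outdeg n dg j) = int (dg j j) + (\<Sum>k\<in>{..<n}-{j}. int (dg j k))"
    using assms by (simp add: outdeg_def sum.remove)
  ultimately show ?thesis by (simp add: laplacian_def)
qed

lemma lap_sum: "(\<Sum>k<n. lap_apply n dg x k) = 0"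
proof -
  have "(\<Sum>k<n. lap_apply n dg x k) = (\<Sum>k<n. \<Sum>j<n. laplacian n dg k j * x j)"
    by (simp add: lap_apply_def)
  also have "\<dots> = (\<Sum>j<n. \<Sum>k<n. laplacian n dg k j * x j)" by (rule sum.swap)
  also have "\<dots> = (\<Sum>j<n. (\<Sum>k<n. laplacian n dg k j) * x j)" by (simp add: sum_distrib_right)
  also have "\<dots> = 0" by (simp add: colsum)
  finally show ?thesis .
qed

lemma lap_zs: "lap_apply n dg x \<in> zero_sum_vecs n"
  using lap_sum by (auto simp: zero_sum_vecs_def vecs_def lap_apply_def)

lemma lap_add: "lap_apply n dg (\<lambda>k. u k + v k) = (\<lambda>k. lap_apply n dg u k + lap_apply n dg v k)"
  by (auto simp: lap_apply_def algebra_simps sum.distrib)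
lemma lap_smult: "lap_apply n dg (\<lambda>k. c * u k) = (\<lambda>k. c * lap_apply n dg u k)"
  by (auto simp: lap_apply_def algebra_simps sum_distrib_left)
lemma lap_neg: "lap_apply n dg (\<lambda>k. - u k) = (\<lambda>k. - lap_apply n dg u k)"
  using lap_smult[of n dg "-1" u] by simp
lemma lap_zero: "lap_apply n dg (\<lambda>k. 0) = (\<lambda>k. 0)"
  using lap_smult[of n dg 0 u] by simp

lemma red_add: "red_lap_apply n dg i (\<lambda>k. u k + v k) = (\<lambda>k. red_lap_apply n dg i u k + red_lap_apply n dg i v k)"
  by (auto simp: red_lap_apply_def algebra_simps sum.distrib)
lemma red_smult: "red_lap_apply n dg i (\<lambda>k. c * u k) = (\<lambda>k. c * red_lap_apply n dg i u k)"
  by (auto simp: red_lap_apply_def algebra_simps sum_distrib_left)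
lemma red_neg: "red_lap_apply n dg i (\<lambda>k. - u k) = (\<lambda>k. - red_lap_apply n dg i u k)"
  using red_smult[of n dg i "-1" u] by simp
lemma red_zero: "red_lap_apply n dg i (\<lambda>k. 0) = (\<lambda>k. 0)"
  using red_smult[of n dg i 0 u] by simp

lemma red_vecs: "red_lap_apply n dg i x \<in> vecs ({..<n} - {i})"
  by (auto simp: red_lap_apply_def vecs_def)

lemma lat_K: "lat (lap_apply n dg ` vecs {..<n})"
  by (rule lat_image[OF lat_vecs]) (auto simp: lap_add lap_neg lap_zero)
lemma K_sub: "lap_apply n dg ` vecs {..<n} \<subseteq> zero_sum_vecs n"
  using lap_zs by auto
lemma lat_R: "lat (red_lap_apply n dg i ` vecs ({..<n} - {i}))"
  by (rule lat_image[OF lat_vecs]) (auto simp: red_add red_neg red_zero)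
lemma R_sub: "red_lap_apply n dg i ` vecs ({..<n} - {i}) \<subseteq> vecs ({..<n} - {i})"
  using red_vecs by auto

lemma wv_vecs: "wv n dg i \<in> vecs ({..<n} - {i})"
  by (auto simp: wv_def vecs_def)

lemma id_pt: assumes "k < n" "k \<noteq> i" "i < n"
  shows "red_lap_apply n dg i (\<lambda>j. if j = i then 0 else y j) k + y i * wv n dg i k = lap_apply n dg y k"
proof -
  have "lap_apply n dg y k = (\<Sum>j<n. laplacian n dg k j * y j)" using assms by (simp add: lap_apply_def)
  also have "\<dots> = laplacian n dg k i * y i + (\<Sum>j\<in>{..<n}-{i}. laplacian n dg k j * y j)"
    using assms by (intro sum.remove) auto
  finally have "lap_apply n dg y k = laplacian n dg k i * y i + (\<Sum>j\<in>{..<n}-{i}. laplacian n dg k j * y j)" .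
  moreover have "red_lap_apply n dg i (\<lambda>j. if j = i then 0 else y j) k = (\<Sum>j\<in>{..<n}-{i}. laplacian n dg k j * y j)"
    using assms by (auto simp: red_lap_apply_def intro!: sum.cong)
  ultimately show ?thesis using assms by (simp add: wv_def)
qed

lemma id_main: assumes "i < n"
  shows "lap_apply n dg y = phi n i (\<lambda>k. red_lap_apply n dg i (\<lambda>j. if j = i then 0 else y j) k + y i * wv n dg i k)"
    (is "_ = phi n i ?z")
proof
  fix k
  have z_i: "?z i = 0" by (simp add: red_lap_apply_def wv_def)
  have z_out: "?z k = 0" if "k \<ge> n" for k using that by (simp add: red_lap_apply_def wv_def)
  show "lap_apply n dg y k = phi n i ?z k"
  proof (cases "k = i")
    case True
    have "(\<Sum>j<n. ?z j) = (\<Sum>j\<in>{..<n}-{i}. ?z j)" using assms z_i by (simp add: sum.remove)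
    also have "\<dots> = (\<Sum>j\<in>{..<n}-{i}. lap_apply n dg y j)" using assms by (intro sum.cong) (auto simp: id_pt)
    also have "\<dots> = - lap_apply n dg y i"
      using lap_sum[of n dg y] assms by (simp add: sum.remove)
    finally show ?thesis using True by (simp add: phi_def)
  next
    case False
    then show ?thesis using id_pt[OF _ False assms] z_out[of k]
      by (cases "k < n") (auto simp: phi_def lap_apply_def)
  qed
qed

lemma phi_inj: assumes "x \<in> vecs ({..<n} - {i})" "x' \<in> vecs ({..<n} - {i})" "phi n i x = phi n i x'"
  shows "x = x'"
proof
  fix k show "x k = x' k"
  proof (cases "k = i")
    case True then show ?thesis using assms(1,2) by (simp add: vecs_def)
  next
    case False then show ?thesis using fun_cong[OF assms(3), of k] by (simp add: phi_def)
  qed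
qed

lemma phi_zs: assumes "i < n" "x \<in> vecs ({..<n} - {i})" shows "phi n i x \<in> zero_sum_vecs n"
proof -
  have xi: "x i = 0" using assms by (simp add: vecs_def)
  have "(\<Sum>k<n. phi n i x k) = phi n i x i + (\<Sum>k\<in>{..<n}-{i}. phi n i x k)" using assms by (simp add: sum.remove)
  also have "(\<Sum>k\<in>{..<n}-{i}. phi n i x k) = (\<Sum>k\<in>{..<n}-{i}. x k)" by (simp add: phi_def)
  also have "\<dots> = (\<Sum>k<n. x k)" using assms xi by (simp add: sum.remove)
  finally have "(\<Sum>k<n. phi n i x k) = 0" by (simp add: phi_def)
  moreover have "phi n i x \<in> vecs {..<n}" using assms by (auto simp: vecs_def phi_def)
  ultimately show ?thesis by (simp add: zero_sum_vecs_def)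
qed

lemma phi_add: "phi n i (\<lambda>k. u k + v k) = (\<lambda>k. phi n i u k + phi n i v k)"
  by (auto simp: phi_def sum.distrib)

lemma phi_zero: "phi n i (\<lambda>k. 0) = (\<lambda>k. 0)" by (auto simp: phi_def)

lemma phi_surj: assumes "i < n" "a \<in> zero_sum_vecs n"
  shows "(\<lambda>k. if k = i then 0 else a k) \<in> vecs ({..<n} - {i})" "phi n i (\<lambda>k. if k = i then 0 else a k) = a"
proof -
  show "(\<lambda>k. if k = i then 0 else a k) \<in> vecs ({..<n} - {i})" using assms by (auto simp: vecs_def zero_sum_vecs_def)
  have "(\<Sum>k<n. a k) = 0" using assms by (simp add: zero_sum_vecs_def)
  then have "a i + (\<Sum>k\<in>{..<n}-{i}. a k) = 0" using assms by (simp add: sum.remove)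
  moreover have "(\<Sum>j<n. (if j = i then 0 else a j)) = (\<Sum>k\<in>{..<n}-{i}. a k)"
    using assms by (simp add: sum.remove)
  ultimately show "phi n i (\<lambda>k. if k = i then 0 else a k) = a" by (auto simp: phi_def)
qed

lemma vecs_off_restrict: "z \<in> vecs ({..<n} - {i}) \<Longrightarrow> (\<lambda>j. if j = i then 0 else z j) = z"
  by (auto simp: vecs_def)

lemma phi_red: assumes "i < n" "z \<in> vecs ({..<n} - {i})"
  shows "phi n i (red_lap_apply n dg i z) = lap_apply n dg z"
proof -
  have zi: "z i = 0" using assms by (simp add: vecs_def)
  show ?thesis using id_main[OF assms(1), of dg z] vecs_off_restrict[OF assms(2)] zi by simp
qed

lemma phi_w: assumes "i < n"
  shows "phi n i (wv n dg i) = lap_apply n dg (\<lambda>k. if k = i then 1 else 0)"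
proof -
  have "(\<lambda>j. if j = i then 0 else (if j = i then 1 else 0)::int) = (\<lambda>j. 0)" by auto
  then show ?thesis using id_main[OF assms(1), of dg "\<lambda>k. if k = i then 1 else 0"] by (simp add: red_zero)
qed

lemma ker_char: assumes "i < n" "x \<in> vecs ({..<n} - {i})" "phi n i x \<in> lap_apply n dg ` vecs {..<n}"
  shows "\<exists>z t. z \<in> vecs ({..<n} - {i}) \<and> x = (\<lambda>k. red_lap_apply n dg i z k + t * wv n dg i k)"
proof -
  obtain y where y: "y \<in> vecs {..<n}" "phi n i x = lap_apply n dg y" using assms by auto
  let ?z = "\<lambda>j. if j = i then 0 else y j"
  have zv: "?z \<in> vecs ({..<n} - {i})" using y by (auto simp: vecs_def)
  have "(\<lambda>k. red_lap_apply n dg i ?z k + y i * wv n dg i k) \<in> vecs ({..<n} - {i})"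
    by (auto simp: vecs_def red_lap_apply_def wv_def)
  then have "x = (\<lambda>k. red_lap_apply n dg i ?z k + y i * wv n dg i k)"
    using phi_inj[OF assms(2)] y id_main[OF assms(1), of dg y] by metis
  then show ?thesis using zv by blast
qed

lemma kappa_R: assumes "i < n" "\<kappa> \<in> vecs {..<n}" "lap_apply n dg \<kappa> = (\<lambda>k. 0)"
  shows "(\<lambda>k. \<kappa> i * wv n dg i k) \<in> red_lap_apply n dg i ` vecs ({..<n} - {i})"
proof -
  let ?z = "\<lambda>j. if j = i then 0 else \<kappa> j"
  have zv: "?z \<in> vecs ({..<n} - {i})" using assms by (auto simp: vecs_def)
  have s: "(\<lambda>k. red_lap_apply n dg i ?z k + \<kappa> i * wv n dg i k) \<in> vecs ({..<n} - {i})"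
    by (auto simp: vecs_def red_lap_apply_def wv_def)
  have "phi n i (\<lambda>k. red_lap_apply n dg i ?z k + \<kappa> i * wv n dg i k) = phi n i (\<lambda>k. 0)"
    using id_main[OF assms(1), of dg \<kappa>] assms(3) phi_zero by metis
  then have "(\<lambda>k. red_lap_apply n dg i ?z k + \<kappa> i * wv n dg i k) = (\<lambda>k. 0)"
    using phi_inj[OF s] lat_zero[OF lat_vecs] by metis
  then have "(\<lambda>k. \<kappa> i * wv n dg i k) = red_lap_apply n dg i (\<lambda>k. - ?z k)"
    unfolding red_neg by (metis add_eq_0_iff)
  moreover have "(\<lambda>k. - ?z k) \<in> vecs ({..<n} - {i})" using lat_neg[OF lat_vecs zv] .
  ultimately show ?thesis by blast
qed


lemma factor_img:
  assumes "group_hom G H f" "subgroup N G" "N \<subseteq> kernel G H f" "g \<in> carrier G"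
  shows "f ` (N #>\<^bsub>G\<^esub> g) = {f g}"
proof -
  interpret group_hom G H f by fact
  have "f (x \<otimes>\<^bsub>G\<^esub> g) = f g" if "x \<in> N" for x
    using that assms(3,4) subgroup.subset[OF assms(2)] by (auto simp: kernel_def)
  then have "f ` (N #>\<^bsub>G\<^esub> g) \<subseteq> {f g}" unfolding r_coset_def by auto
  moreover have "g \<in> N #>\<^bsub>G\<^esub> g" by (rule G.rcos_self[OF assms(4,2)])
  ultimately show ?thesis by blast
qed

lemma factor_val:
  assumes "group_hom G H f" "subgroup N G" "N \<subseteq> kernel G H f" "g \<in> carrier G"
  shows "the_elem (f ` (N #>\<^bsub>G\<^esub> g)) = f g"
  using factor_img[OF assms] by simp

lemma factor_hom:
  assumes "group_hom G H f" "N \<lhd> G" "N \<subseteq> kernel G H f"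
  shows "(\<lambda>X. the_elem (f ` X)) \<in> hom (G Mod N) H"
proof -
  interpret group_hom G H f by fact
  interpret normal N G by fact
  have sg: "subgroup N G" by (rule is_subgroup)
  show ?thesis
  proof (rule homI)
    fix X assume "X \<in> carrier (G Mod N)"
    then obtain g where g: "g \<in> carrier G" "X = N #>\<^bsub>G\<^esub> g" by (auto simp: carrier_FactGroup)
    show "the_elem (f ` X) \<in> carrier H" using factor_val[OF assms(1) sg assms(3) g(1)] g by simp
  next
    fix X Y assume "X \<in> carrier (G Mod N)" "Y \<in> carrier (G Mod N)"
    then obtain g g' where g: "g \<in> carrier G" "X = N #>\<^bsub>G\<^esub> g" "g' \<in> carrier G" "Y = N #>\<^bsub>G\<^esub> g'"
      by (auto simp: carrier_FactGroup)
    have "X \<otimes>\<^bsub>G Mod N\<^esub> Y = N #>\<^bsub>G\<^esub> (g \<otimes>\<^bsub>G\<^esub> g')" using g by (simp add: rcos_sum)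
    then show "the_elem (f ` (X \<otimes>\<^bsub>G Mod N\<^esub> Y)) = the_elem (f ` X) \<otimes>\<^bsub>H\<^esub> the_elem (f ` Y)"
      using g factor_val[OF assms(1) sg assms(3)] by simp
  qed
qed

lemma factor_onto:
  assumes "group_hom G H f" "N \<lhd> G" "N \<subseteq> kernel G H f" "f ` carrier G = carrier H"
  shows "(\<lambda>X. the_elem (f ` X)) ` carrier (G Mod N) = carrier H"
proof -
  interpret group_hom G H f by fact
  interpret normal N G by fact
  have sg: "subgroup N G" by (rule is_subgroup)
  have "(\<lambda>X. the_elem (f ` X)) ` carrier (G Mod N) = (\<lambda>g. the_elem (f ` (N #>\<^bsub>G\<^esub> g))) ` carrier G"
    by (auto simp: carrier_FactGroup)
  also have "\<dots> = f ` carrier G" using factor_val[OF assms(1) sg assms(3)] by (auto intro!: image_cong)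
  finally show ?thesis using assms(4) by simp
qed

definition fmap :: "nat \<Rightarrow> (nat\<Rightarrow>nat\<Rightarrow>nat) \<Rightarrow> nat \<Rightarrow> (nat\<Rightarrow>int) \<Rightarrow> (nat\<Rightarrow>int) set" where
  "fmap n dg i x = (lap_apply n dg ` vecs {..<n}) #>\<^bsub>vec_group (zero_sum_vecs n)\<^esub> phi n i x"

definition pimap :: "nat \<Rightarrow> (nat\<Rightarrow>nat\<Rightarrow>nat) \<Rightarrow> nat \<Rightarrow> (nat\<Rightarrow>int) set \<Rightarrow> (nat\<Rightarrow>int) set" where
  "pimap n dg i X = the_elem (fmap n dg i ` X)"

lemma K_normal: "lap_apply n dg ` vecs {..<n} \<lhd> vec_group (zero_sum_vecs n)"
  by (rule lat_normal[OF lat_zs lat_K K_sub])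
lemma R_normal: "red_lap_apply n dg i ` vecs ({..<n} - {i}) \<lhd> vec_group (vecs ({..<n} - {i}))"
  by (rule lat_normal[OF lat_vecs lat_R R_sub])

lemma S_comm: "comm_group (total_sandpile n dg)"
  unfolding total_sandpile_def by (rule lat_Mod_comm[OF lat_zs lat_K K_sub])
lemma Si_comm: "comm_group (sandpile_at n dg i)"
  unfolding sandpile_at_def by (rule lat_Mod_comm[OF lat_vecs lat_R R_sub])

lemma phi_hom: "i < n \<Longrightarrow> phi n i \<in> hom (vec_group (vecs ({..<n} - {i}))) (vec_group (zero_sum_vecs n))"
  by (rule homI) (auto simp: phi_zs phi_add)

lemma fmap_ghom: assumes "i < n"
  shows "group_hom (vec_group (vecs ({..<n} - {i}))) (total_sandpile n dg) (fmap n dg i)"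
proof -
  have "(\<lambda>a. (lap_apply n dg ` vecs {..<n}) #>\<^bsub>vec_group (zero_sum_vecs n)\<^esub> a) \<circ> phi n i
     \<in> hom (vec_group (vecs ({..<n} - {i}))) (total_sandpile n dg)"
    unfolding total_sandpile_def
    by (rule hom_compose[OF phi_hom[OF assms] normal.r_coset_hom_Mod[OF K_normal]])
  then have "fmap n dg i \<in> hom (vec_group (vecs ({..<n} - {i}))) (total_sandpile n dg)"
    by (simp add: fmap_def[abs_def] o_def)
  then show ?thesis
    using lat_group[OF lat_vecs] comm_group.axioms(2)[OF S_comm]
    by (auto simp: group_hom_def group_hom_axioms_def)
qed

lemma K_coset_one: assumes "a \<in> zero_sum_vecs n"
  shows "(lap_apply n dg ` vecs {..<n}) #>\<^bsub>vec_group (zero_sum_vecs n)\<^esub> a = lap_apply n dg ` vecs {..<n}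
     \<longleftrightarrow> a \<in> lap_apply n dg ` vecs {..<n}"
proof -
  let ?K = "lap_apply n dg ` vecs {..<n}"
  have z: "?K #>\<^bsub>vec_group (zero_sum_vecs n)\<^esub> (\<lambda>k. 0) = ?K"
    unfolding rcos_vg by simp
  show ?thesis
  proof
    assume "?K #>\<^bsub>vec_group (zero_sum_vecs n)\<^esub> a = ?K"
    then have "?K #>\<^bsub>vec_group (zero_sum_vecs n)\<^esub> a = ?K #>\<^bsub>vec_group (zero_sum_vecs n)\<^esub> (\<lambda>k. 0)"
      using z by simp
    from rcos_eqD[OF lat_K this] have "(\<lambda>k. a k - 0) \<in> ?K" .
    then show "a \<in> ?K" by simp
  next
    assume "a \<in> ?K"
    then have "?K #>\<^bsub>vec_group (zero_sum_vecs n)\<^esub> a = ?K #>\<^bsub>vec_group (zero_sum_vecs n)\<^esub> (\<lambda>k. 0)"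
      by (intro rcos_eqI[OF lat_K]) simp
    then show "?K #>\<^bsub>vec_group (zero_sum_vecs n)\<^esub> a = ?K" using z by simp
  qed
qed

lemma fmap_kernel: assumes "i < n"
  shows "kernel (vec_group (vecs ({..<n} - {i}))) (total_sandpile n dg) (fmap n dg i)
    = {x \<in> vecs ({..<n} - {i}). phi n i x \<in> lap_apply n dg ` vecs {..<n}}"
proof -
  have "\<And>x. x \<in> vecs ({..<n} - {i}) \<Longrightarrow> (fmap n dg i x = \<one>\<^bsub>total_sandpile n dg\<^esub>) = (phi n i x \<in> lap_apply n dg ` vecs {..<n})"
    unfolding fmap_def total_sandpile_def one_FactGroup using K_coset_one phi_zs[OF assms] by blast
  then show ?thesis unfolding kernel_def vg_simps by blast
qed

lemma R_sub_kernel: assumes "i < n"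
  shows "red_lap_apply n dg i ` vecs ({..<n} - {i}) \<subseteq> kernel (vec_group (vecs ({..<n} - {i}))) (total_sandpile n dg) (fmap n dg i)"
  unfolding fmap_kernel[OF assms]
proof
  fix r assume "r \<in> red_lap_apply n dg i ` vecs ({..<n} - {i})"
  then obtain z where z: "z \<in> vecs ({..<n} - {i})" "r = red_lap_apply n dg i z" by auto
  have "z \<in> vecs {..<n}" using z(1) by (auto simp: vecs_def)
  then have "phi n i r \<in> lap_apply n dg ` vecs {..<n}" using phi_red[OF assms z(1)] z(2) by simp
  then show "r \<in> {x \<in> vecs ({..<n} - {i}). phi n i x \<in> lap_apply n dg ` vecs {..<n}}"
    using z(2) red_vecs by simp
qed

lemma fmap_onto: assumes "i < n"
  shows "fmap n dg i ` vecs ({..<n} - {i}) = carrier (total_sandpile n dg)"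
proof -
  have 1: "phi n i ` vecs ({..<n} - {i}) = zero_sum_vecs n"
  proof
    show "phi n i ` vecs ({..<n} - {i}) \<subseteq> zero_sum_vecs n" using phi_zs[OF assms] by blast
    show "zero_sum_vecs n \<subseteq> phi n i ` vecs ({..<n} - {i})"
    proof
      fix a assume a: "a \<in> zero_sum_vecs n"
      show "a \<in> phi n i ` vecs ({..<n} - {i})" using phi_surj[OF assms a] by (metis image_eqI)
    qed
  qed
  have "fmap n dg i ` vecs ({..<n} - {i}) = (\<lambda>a. (lap_apply n dg ` vecs {..<n}) #>\<^bsub>vec_group (zero_sum_vecs n)\<^esub> a) ` (phi n i ` vecs ({..<n} - {i}))"
    unfolding fmap_def image_image ..
  also have "\<dots> = carrier (total_sandpile n dg)" unfolding total_sandpile_def carrier_FactGroup 1 by simp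
  finally show ?thesis .
qed

lemma part1: assumes "i < n"
  shows "surj_hom (sandpile_at n dg i) (total_sandpile n dg) (pimap n dg i)"
proof -
  have h: "(\<lambda>X. the_elem (fmap n dg i ` X)) \<in> hom (sandpile_at n dg i) (total_sandpile n dg)"
    unfolding sandpile_at_def by (rule factor_hom[OF fmap_ghom[OF assms] R_normal R_sub_kernel[OF assms]])
  have o: "(\<lambda>X. the_elem (fmap n dg i ` X)) ` carrier (sandpile_at n dg i) = carrier (total_sandpile n dg)"
    unfolding sandpile_at_def using factor_onto[OF fmap_ghom[OF assms] R_normal R_sub_kernel[OF assms]] fmap_onto[OF assms]
    by simp
  show ?thesis using h o unfolding surj_hom_def pimap_def[abs_def] by simp
qed


lemma pow_coset_nat:
  assumes "lat V" "lat R" "R \<subseteq> V" "w \<in> V"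
  shows "(R #>\<^bsub>vec_group V\<^esub> w) [^]\<^bsub>vec_group V Mod R\<^esub> (m::nat) = R #>\<^bsub>vec_group V\<^esub> (\<lambda>k. int m * w k)"
proof (induction m)
  case 0
  have "R #>\<^bsub>vec_group V\<^esub> (\<lambda>k. int 0 * w k) = R" unfolding rcos_vg by simp
  then show ?case by simp
next
  case (Suc m)
  interpret normal R "vec_group V" by (rule lat_normal[OF assms(1-3)])
  have mv: "(\<lambda>k. int m * w k) \<in> V"
  proof (induction m)
    case 0 then show ?case using lat_zero[OF assms(1)] by simp
  next
    case (Suc m)
    from lat_add[OF assms(1) this assms(4)] show ?case by (simp add: algebra_simps)
  qed
  have "(R #>\<^bsub>vec_group V\<^esub> w) [^]\<^bsub>vec_group V Mod R\<^esub> Suc m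
      = (R #>\<^bsub>vec_group V\<^esub> (\<lambda>k. int m * w k)) <#>\<^bsub>vec_group V\<^esub> (R #>\<^bsub>vec_group V\<^esub> w)"
    using Suc by simp
  also have "\<dots> = R #>\<^bsub>vec_group V\<^esub> (\<lambda>k. int m * w k + w k)"
    using rcos_sum[of "\<lambda>k. int m * w k" w] mv assms(4) by simp
  also have "\<dots> = R #>\<^bsub>vec_group V\<^esub> (\<lambda>k. int (Suc m) * w k)" by (simp add: algebra_simps)
  finally show ?case .
qed

lemma pow_coset_int:
  assumes "lat V" "lat R" "R \<subseteq> V" "w \<in> V"
  shows "(R #>\<^bsub>vec_group V\<^esub> w) [^]\<^bsub>vec_group V Mod R\<^esub> (t::int) = R #>\<^bsub>vec_group V\<^esub> (\<lambda>k. t * w k)"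
proof (cases "t \<ge> 0")
  case True
  define m where "m = nat t"
  have "t = int m" using True m_def by simp
  then show ?thesis using pow_coset_nat[OF assms, of m] by (simp add: int_pow_int)
next
  case False
  define m where "m = nat (- t)"
  have m: "t = - int m" using False m_def by simp
  interpret N: normal R "vec_group V" by (rule lat_normal[OF assms(1-3)])
  interpret Q: group "vec_group V Mod R" by (rule N.factorgroup_is_group)
  interpret VG: group "vec_group V" by (rule lat_group[OF assms(1)])
  have wc: "R #>\<^bsub>vec_group V\<^esub> w \<in> carrier (vec_group V Mod R)"
    using assms(4) by (auto simp: carrier_FactGroup)
  have mv: "(\<lambda>k. int m * w k) \<in> V"
  proof (induction m)
    case 0 then show ?case using lat_zero[OF assms(1)] by simp
  next
    case (Suc m)
    from lat_add[OF assms(1) this assms(4)] show ?case by (simp add: algebra_simps)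
  qed
  have mv': "(\<lambda>k. - (int m * w k)) \<in> V" using lat_neg[OF assms(1) mv] .
  have "(R #>\<^bsub>vec_group V\<^esub> w) [^]\<^bsub>vec_group V Mod R\<^esub> t
      = inv\<^bsub>vec_group V Mod R\<^esub> ((R #>\<^bsub>vec_group V\<^esub> w) [^]\<^bsub>vec_group V Mod R\<^esub> m)"
    using Q.int_pow_neg_int[OF wc] m by simp
  also have "\<dots> = R #>\<^bsub>vec_group V\<^esub> (\<lambda>k. - (int m * w k))"
  proof (rule Q.inv_equality)
    have "(R #>\<^bsub>vec_group V\<^esub> (\<lambda>k. - (int m * w k))) <#>\<^bsub>vec_group V\<^esub> (R #>\<^bsub>vec_group V\<^esub> (\<lambda>k. int m * w k))
       = R #>\<^bsub>vec_group V\<^esub> (\<lambda>k. 0)"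
      using N.rcos_sum[of "\<lambda>k. - (int m * w k)" "\<lambda>k. int m * w k"] mv mv' by simp
    also have "\<dots> = R" unfolding rcos_vg by simp
    finally show "(R #>\<^bsub>vec_group V\<^esub> (\<lambda>k. - (int m * w k))) \<otimes>\<^bsub>vec_group V Mod R\<^esub>
        (R #>\<^bsub>vec_group V\<^esub> w) [^]\<^bsub>vec_group V Mod R\<^esub> m = \<one>\<^bsub>vec_group V Mod R\<^esub>"
      using pow_coset_nat[OF assms, of m] by simp
    show "(R #>\<^bsub>vec_group V\<^esub> w) [^]\<^bsub>vec_group V Mod R\<^esub> m \<in> carrier (vec_group V Mod R)"
      using wc by simp
    show "R #>\<^bsub>vec_group V\<^esub> (\<lambda>k. - (int m * w k)) \<in> carrier (vec_group V Mod R)"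
      using mv' by (auto simp: carrier_FactGroup)
  qed
  finally show ?thesis using m by simp
qed


lemma pimap_ghom: "i < n \<Longrightarrow> group_hom (sandpile_at n dg i) (total_sandpile n dg) (pimap n dg i)"
  using part1[of i n dg] comm_group.axioms(2)[OF Si_comm] comm_group.axioms(2)[OF S_comm]
  by (auto simp: surj_hom_def group_hom_def group_hom_axioms_def)

lemma pimap_val: assumes "i < n" "x \<in> vecs ({..<n} - {i})"
  shows "pimap n dg i (red_lap_apply n dg i ` vecs ({..<n} - {i}) #>\<^bsub>vec_group (vecs ({..<n} - {i}))\<^esub> x) = fmap n dg i x"
  unfolding pimap_def
  by (rule factor_val[OF fmap_ghom[OF assms(1)] lat_subgroup[OF lat_vecs lat_R R_sub] R_sub_kernel[OF assms(1)]]) (use assms in simp)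

lemma kernel_pimap: assumes "i < n"
  shows "kernel (sandpile_at n dg i) (total_sandpile n dg) (pimap n dg i)
    = generate (sandpile_at n dg i) {red_lap_apply n dg i ` vecs ({..<n} - {i}) #>\<^bsub>vec_group (vecs ({..<n} - {i}))\<^esub> wv n dg i}"
    (is "?ker = generate ?Si {?a}")
proof -
  let ?V = "vecs ({..<n} - {i})"
  let ?R = "red_lap_apply n dg i ` vecs ({..<n} - {i})"
  let ?K = "lap_apply n dg ` vecs {..<n}"
  interpret Si: group ?Si using comm_group.axioms(2)[OF Si_comm] .
  interpret h: group_hom ?Si "total_sandpile n dg" "pimap n dg i" by (rule pimap_ghom[OF assms])
  have ac: "?a \<in> carrier ?Si" using wv_vecs unfolding sandpile_at_def carrier_FactGroup by simp
  have pw: "?a [^]\<^bsub>?Si\<^esub> (t::int) = ?R #>\<^bsub>vec_group ?V\<^esub> (\<lambda>k. t * wv n dg i k)" for t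
    unfolding sandpile_at_def by (rule pow_coset_int[OF lat_vecs lat_R R_sub wv_vecs])
  have ek: "(\<lambda>k. if k = i then 1 else 0) \<in> vecs {..<n}" using assms by (auto simp: vecs_def)
  have "pimap n dg i ?a = fmap n dg i (wv n dg i)" by (rule pimap_val[OF assms wv_vecs])
  also have "\<dots> = \<one>\<^bsub>total_sandpile n dg\<^esub>"
    unfolding fmap_def total_sandpile_def one_FactGroup K_coset_one[OF phi_zs[OF assms wv_vecs]]
    using phi_w[OF assms] ek by simp
  finally have ak: "?a \<in> ?ker" using ac by (simp add: kernel_def)
  have "generate ?Si {?a} \<subseteq> ?ker"
    using Si.generate_subgroup_incl[OF _ h.subgroup_kernel] ak by blast
  moreover have "?ker \<subseteq> generate ?Si {?a}"
  proof
    fix X assume X: "X \<in> ?ker"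
    then have Xc: "X \<in> carrier ?Si" and X1: "pimap n dg i X = \<one>\<^bsub>total_sandpile n dg\<^esub>" by (auto simp: kernel_def)
    then obtain x where x: "x \<in> ?V" "X = ?R #>\<^bsub>vec_group ?V\<^esub> x"
      unfolding sandpile_at_def carrier_FactGroup by auto
    have "fmap n dg i x = \<one>\<^bsub>total_sandpile n dg\<^esub>" using X1 pimap_val[OF assms x(1)] x(2) by simp
    then have "phi n i x \<in> ?K"
      unfolding fmap_def total_sandpile_def one_FactGroup K_coset_one[OF phi_zs[OF assms x(1)]] .
    then obtain z t where zt: "z \<in> ?V" "x = (\<lambda>k. red_lap_apply n dg i z k + t * wv n dg i k)"
      using ker_char[OF assms x(1)] by blast
    have "(\<lambda>k. x k - t * wv n dg i k) = red_lap_apply n dg i z" using zt(2) by simp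
    then have "(\<lambda>k. x k - t * wv n dg i k) \<in> ?R" using zt(1) by simp
    then have "X = ?R #>\<^bsub>vec_group ?V\<^esub> (\<lambda>k. t * wv n dg i k)"
      using x(2) rcos_eqI[OF lat_R] by metis
    then have "X = ?a [^]\<^bsub>?Si\<^esub> t" using pw by simp
    then show "X \<in> generate ?Si {?a}" using Si.generate_pow[OF ac] by blast
  qed
  ultimately show ?thesis by blast
qed

lemma order_Si: assumes "i < n"
  shows "Coset.order (sandpile_at n dg i) = Coset.order (total_sandpile n dg) * card (kernel (sandpile_at n dg i) (total_sandpile n dg) (pimap n dg i))"
proof -
  let ?Si = "sandpile_at n dg i"
  interpret Si: group ?Si using comm_group.axioms(2)[OF Si_comm] .
  interpret h: group_hom ?Si "total_sandpile n dg" "pimap n dg i" by (rule pimap_ghom[OF assms])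
  have "?Si Mod kernel ?Si (total_sandpile n dg) (pimap n dg i) \<cong> total_sandpile n dg"
    using h.FactGroup_iso part1[OF assms] by (simp add: surj_hom_def)
  then have "card (rcosets\<^bsub>?Si\<^esub> kernel ?Si (total_sandpile n dg) (pimap n dg i)) = Coset.order (total_sandpile n dg)"
    using iso_same_card unfolding Coset.order_def FactGroup_def by fastforce
  then show ?thesis using Si.lagrange[OF h.subgroup_kernel] by simp
qed

lemma kernel_dvd: assumes "i < n" "\<kappa> \<in> vecs {..<n}" "lap_apply n dg \<kappa> = (\<lambda>k. 0)"
  shows "int (card (kernel (sandpile_at n dg i) (total_sandpile n dg) (pimap n dg i))) dvd \<kappa> i"
proof -
  let ?Si = "sandpile_at n dg i"
  let ?V = "vecs ({..<n} - {i})"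
  let ?R = "red_lap_apply n dg i ` vecs ({..<n} - {i})"
  let ?a = "?R #>\<^bsub>vec_group ?V\<^esub> wv n dg i"
  interpret Si: group ?Si using comm_group.axioms(2)[OF Si_comm] .
  have ac: "?a \<in> carrier ?Si" using wv_vecs unfolding sandpile_at_def carrier_FactGroup by simp
  have "?a [^]\<^bsub>?Si\<^esub> (\<kappa> i) = ?R #>\<^bsub>vec_group ?V\<^esub> (\<lambda>k. \<kappa> i * wv n dg i k)"
    unfolding sandpile_at_def by (rule pow_coset_int[OF lat_vecs lat_R R_sub wv_vecs])
  also have "\<dots> = ?R #>\<^bsub>vec_group ?V\<^esub> (\<lambda>k. 0)"
    by (rule rcos_eqI[OF lat_R]) (use kappa_R[OF assms] in simp)
  also have "\<dots> = \<one>\<^bsub>?Si\<^esub>" unfolding sandpile_at_def one_FactGroup rcos_vg by simp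
  finally have "int (Si.ord ?a) dvd \<kappa> i" using Si.int_pow_eq_id[OF ac] by simp
  moreover have "Si.ord ?a = card (kernel ?Si (total_sandpile n dg) (pimap n dg i))"
    using kernel_pimap[OF assms(1)] Si.generate_pow_card[OF ac] by simp
  ultimately show ?thesis by simp
qed


lemma kappa0_exists: assumes "n \<ge> 1"
  shows "\<exists>\<kappa>. \<kappa> \<in> vecs {..<n} \<and> lap_apply n dg \<kappa> = (\<lambda>k. 0) \<and> (\<exists>k<n. \<kappa> k \<noteq> 0)"
proof -
  define Lm :: "int mat" where "Lm = mat n n (\<lambda>(r,c). laplacian n dg r c)"
  have Lc: "Lm \<in> carrier_mat n n" by (simp add: Lm_def)
  have LTc: "transpose_mat Lm \<in> carrier_mat n n" using Lc by simp
  have "transpose_mat Lm *\<^sub>v vec n (\<lambda>_. 1) = 0\<^sub>v n"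
  proof (rule eq_vecI)
    fix r assume r: "r < dim_vec (0\<^sub>v n :: int vec)"
    then have "(transpose_mat Lm *\<^sub>v vec n (\<lambda>_. 1)) $ r = (\<Sum>c<n. laplacian n dg c r)"
      by (simp add: Lm_def scalar_prod_def atLeast0LessThan)
    also have "\<dots> = 0" using colsum r by simp
    finally show "(transpose_mat Lm *\<^sub>v vec n (\<lambda>_. 1)) $ r = (0\<^sub>v n :: int vec) $ r" using r by simp
  qed (simp add: Lm_def)
  moreover have "vec n (\<lambda>_. 1) \<noteq> (0\<^sub>v n :: int vec)"
  proof
    assume "vec n (\<lambda>_. 1) = (0\<^sub>v n :: int vec)"
    then have "vec n (\<lambda>_. 1) $ 0 = (0\<^sub>v n :: int vec) $ 0" by simp
    then show False using assms by simp
  qed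
  moreover have "vec n (\<lambda>_. 1) \<in> carrier_vec n" by simp
  ultimately have "det (transpose_mat Lm) = 0"
    using det_0_iff_vec_prod_zero[OF LTc] by blast
  then have "det Lm = 0" using det_transpose[OF Lc] by simp
  then obtain v where v: "v \<in> carrier_vec n" "v \<noteq> 0\<^sub>v n" "Lm *\<^sub>v v = 0\<^sub>v n"
    using det_0_iff_vec_prod_zero[OF Lc] by blast
  define \<kappa> where "\<kappa> = (\<lambda>k. if k < n then v $ k else 0)"
  have "\<kappa> \<in> vecs {..<n}" by (simp add: \<kappa>_def vecs_def)
  moreover have "lap_apply n dg \<kappa> = (\<lambda>k. 0)"
  proof
    fix k show "lap_apply n dg \<kappa> k = 0"
    proof (cases "k < n")
      case True
      have "lap_apply n dg \<kappa> k = (Lm *\<^sub>v v) $ k"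
        using True v(1) by (simp add: lap_apply_def Lm_def \<kappa>_def scalar_prod_def atLeast0LessThan)
      then show ?thesis using v(3) True by simp
    qed (simp add: lap_apply_def)
  qed
  moreover have "\<exists>k<n. \<kappa> k \<noteq> 0"
  proof (rule ccontr)
    assume nz: "\<not> (\<exists>k<n. \<kappa> k \<noteq> 0)"
    have "v = 0\<^sub>v n"
    proof (rule eq_vecI)
      fix k assume "k < dim_vec (0\<^sub>v n :: int vec)"
      then have kn: "k < n" by simp
      then have "\<kappa> k = 0" using nz by blast
      then show "v $ k = (0\<^sub>v n :: int vec) $ k" using kn by (simp add: \<kappa>_def)
    next
      show "dim_vec v = dim_vec (0\<^sub>v n :: int vec)" using v(1) by simp
    qed
    then show False using v(2) by simp
  qed
  ultimately show ?thesis by blast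
qed

lemma kappa_exists: assumes "n \<ge> 1"
  shows "\<exists>\<kappa>. \<kappa> \<in> vecs {..<n} \<and> lap_apply n dg \<kappa> = (\<lambda>k. 0) \<and> (\<forall>d::int. (\<forall>k<n. d dvd \<kappa> k) \<longrightarrow> d dvd 1)"
proof -
  obtain \<kappa>0 where k0: "\<kappa>0 \<in> vecs {..<n}" "lap_apply n dg \<kappa>0 = (\<lambda>k. 0)" "\<exists>k<n. \<kappa>0 k \<noteq> 0"
    using kappa0_exists[OF assms] by blast
  define g where "g = Gcd (\<kappa>0 ` {..<n})"
  have gd: "g dvd \<kappa>0 k" if "k < n" for k using that by (simp add: g_def)
  obtain k1 where k1: "k1 < n" "\<kappa>0 k1 \<noteq> 0" using k0(3) by blast
  have g0: "g \<noteq> 0" using gd[OF k1(1)] k1(2) by auto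
  define \<kappa> where "\<kappa> = (\<lambda>k. \<kappa>0 k div g)"
  have k0eq: "\<kappa>0 = (\<lambda>k. g * \<kappa> k)"
  proof
    fix k show "\<kappa>0 k = g * \<kappa> k"
    proof (cases "k < n")
      case True then show ?thesis using gd[OF True] by (simp add: \<kappa>_def)
    next
      case False then have "\<kappa>0 k = 0" using k0(1) by (simp add: vecs_def)
      then show ?thesis by (simp add: \<kappa>_def)
    qed
  qed
  have "\<kappa> \<in> vecs {..<n}" using k0(1) by (simp add: vecs_def \<kappa>_def)
  moreover have "lap_apply n dg \<kappa> = (\<lambda>k. 0)"
  proof
    fix k
    have "lap_apply n dg \<kappa>0 = (\<lambda>k. g * lap_apply n dg \<kappa> k)" unfolding k0eq by (rule lap_smult)
    from fun_cong[OF this, of k] have "g * lap_apply n dg \<kappa> k = 0" using k0(2) by simp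
    then show "lap_apply n dg \<kappa> k = 0" using g0 by simp
  qed
  moreover have "\<forall>d::int. (\<forall>k<n. d dvd \<kappa> k) \<longrightarrow> d dvd 1"
  proof (intro allI impI)
    fix d :: int assume d: "\<forall>k<n. d dvd \<kappa> k"
    have "d * g dvd \<kappa>0 k" if "k < n" for k using d that k0eq by (simp add: mult.commute)
    then have "d * g dvd g" unfolding g_def by (intro Gcd_greatest) auto
    then have "d * g dvd 1 * g" by simp
    then show "d dvd 1" using g0 by (simp only: dvd_mult_cancel_right) simp
  qed
  ultimately show ?thesis by blast
qed


lemma key_prime:
  fixes g m p :: nat
  assumes g: "g > 0" and p: "prime p" "p dvd m"
  shows "\<not> p dvd (g div gcd g (m ^ g))"
proof
  assume pq: "p dvd g div gcd g (m ^ g)"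
  let ?h = "gcd g (m ^ g)"
  let ?k = "multiplicity p g"
  have pk: "p ^ ?k dvd g" by (rule multiplicity_dvd)
  have "p ^ ?k \<le> g" using pk g by (rule dvd_imp_le)
  moreover have "?k < 2 ^ ?k" by (rule less_exp)
  moreover have "2 ^ ?k \<le> p ^ ?k" using prime_ge_2_nat[OF p(1)] by (simp add: power_mono)
  ultimately have kg: "?k \<le> g" by linarith
  have "p ^ ?k dvd p ^ g" using kg by (rule le_imp_power_dvd)
  also have "p ^ g dvd m ^ g" using p(2) by (rule dvd_power_same)
  finally have "p ^ ?k dvd ?h" using pk by simp
  then have "p * p ^ ?k dvd (g div ?h) * ?h" by (rule mult_dvd_mono[OF pq])
  moreover have "(g div ?h) * ?h = g" by simp
  ultimately have "p ^ Suc ?k dvd g" by simp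
  moreover have "\<not> is_unit p" using prime_gt_1_nat[OF p(1)] by simp
  moreover have "g \<noteq> 0" using g by simp
  ultimately have "Suc ?k \<le> ?k" using multiplicity_geI[of g p "Suc ?k"] by blast
  then show False by simp
qed

lemma coprime_parts:
  fixes g m :: nat
  assumes g: "g > 0"
  shows "coprime (g div gcd g (m ^ g)) m" "coprime (g div gcd g (m ^ g)) (gcd g (m ^ g))"
proof -
  let ?h = "gcd g (m ^ g)"
  let ?q = "g div ?h"
  show "coprime ?q m"
  proof (rule ccontr)
    assume "\<not> coprime ?q m"
    then have "gcd ?q m \<noteq> 1" by (simp add: coprime_iff_gcd_eq_1)
    then obtain p where "prime p" "p dvd gcd ?q m" using prime_factor_nat by blast
    then show False using key_prime[OF g, of p m] by simp
  qed
  show "coprime ?q ?h"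
  proof (rule ccontr)
    assume "\<not> coprime ?q ?h"
    then have "gcd ?q ?h \<noteq> 1" by (simp add: coprime_iff_gcd_eq_1)
    then obtain p where p: "prime p" "p dvd gcd ?q ?h" using prime_factor_nat by blast
    then have "p dvd m ^ g" by (meson dvd_trans gcd_dvd2)
    then have "p dvd m" by (rule prime_dvd_power[OF p(1)])
    then show False using key_prime[OF g p(1)] p(2) by simp
  qed
qed

lemma nt_step:
  fixes g r m :: nat
  assumes g: "g > 0"
  shows "\<exists>u v c c' :: int. int g dvd u * v \<and>
     int g dvd (int r * c * u^2 + int m * c' * v^2 - int (gcd r (gcd g (m ^ g))))"
proof -
  define h where "h = gcd g (m ^ g)"
  define q where "q = g div h"
  define t where "t = gcd r h"
  have gqh: "g = q * h" by (simp add: q_def h_def)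
  have cqm: "coprime q m" and cqh: "coprime q h" using coprime_parts[OF g] by (simp_all add: q_def h_def)
  obtain a b where ab: "a * int q + b * int h = 1"
  proof -
    have "coprime (int q) (int h)" using cqh by simp
    then have "gcd (int q) (int h) = 1" by (simp only: coprime_iff_gcd_eq_1)
    then show ?thesis using bezout_int[of "int q" "int h"] that by auto
  qed
  obtain e f where ef: "e * int m + f * int q = 1"
  proof -
    have "coprime (int m) (int q)" using cqm by (simp add: coprime_commute)
    then have "gcd (int m) (int q) = 1" by (simp only: coprime_iff_gcd_eq_1)
    then show ?thesis using bezout_int[of "int m" "int q"] that by auto
  qed
  obtain x y where xy: "x * int r + y * int h = int t"
  proof -
    have "gcd (int r) (int h) = int t" by (simp add: t_def)
    then show ?thesis using bezout_int[of "int r" "int h"] that by auto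
  qed
  define u where "u = a * int q"
  define v where "v = b * int h"
  define c' where "c' = int t * e"
  have "int g dvd u * v" by (simp add: u_def v_def gqh)
  moreover have "int g dvd (int r * x * u^2 + int m * c' * v^2 - int t)"
  proof -
    have d1: "int q dvd (int r * x * u^2 + int m * c' * v^2 - int t)"
    proof -
      have "int r * x * u^2 + int m * c' * v^2 - int t
        = int q * (int r * x * a^2 * int q + int t * (-2*a + a^2 * int q - f + 2*a*f*int q - a^2*f*(int q)^2))"
      proof -
        have vq: "b * int h = 1 - a * int q" using ab by linarith
        have me: "int m * e = 1 - f * int q" using ef mult.commute[of "int m" e] by linarith
        have "int r * x * u^2 + int m * c' * v^2 - int t
            = int r * x * (a * int q)^2 + int t * (int m * e) * (b * int h)^2 - int t"
          unfolding u_def v_def c'_def by (simp add: mult_ac)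
        also have "\<dots> = int r * x * (a * int q)^2 + int t * (1 - f * int q) * (1 - a * int q)^2 - int t"
          unfolding vq me ..
        also have "\<dots> = int q * (int r * x * a^2 * int q + int t * (-2*a + a^2 * int q - f + 2*a*f*int q - a^2*f*(int q)^2))"
          by (simp add: power2_eq_square algebra_simps)
        finally show ?thesis .
      qed
      then show ?thesis by simp
    qed
    have d2: "int h dvd (int r * x * u^2 + int m * c' * v^2 - int t)"
    proof -
      have "int r * x * u^2 + int m * c' * v^2 - int t
        = int h * (int t * (-2*b + b^2 * int h) - y * (1 - b * int h)^2 + int m * int t * e * b^2 * int h)"
      proof -
        have uq: "a * int q = 1 - b * int h" using ab by linarith
        have rx: "int r * x = int t - y * int h" using xy by (simp add: algebra_simps)
        have "int r * x * u^2 + int m * c' * v^2 - int t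
            = (int r * x) * (a * int q)^2 + int m * int t * e * (b * int h)^2 - int t"
          unfolding u_def v_def c'_def by (simp add: mult_ac)
        also have "\<dots> = (int t - y * int h) * (1 - b * int h)^2 + int m * int t * e * (b * int h)^2 - int t"
          unfolding uq rx ..
        also have "\<dots> = int h * (int t * (-2*b + b^2 * int h) - y * (1 - b * int h)^2 + int m * int t * e * b^2 * int h)"
          by (simp add: power2_eq_square algebra_simps)
        finally show ?thesis .
      qed
      then show ?thesis by simp
    qed
    have "coprime (int q) (int h)" using cqh by simp
    from divides_mult[OF d1 d2 this] show ?thesis by (simp add: gqh)
  qed
  ultimately show ?thesis unfolding t_def h_def by blast
qed


definition good :: "('b, 'c) monoid_scheme \<Rightarrow> ('a, 'd) monoid_scheme \<Rightarrow> ('b \<Rightarrow> 'a) \<Rightarrow> nat \<Rightarrow> bool" where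
  "good B G \<chi> r \<longleftrightarrow> \<chi> \<in> hom B G \<and> (\<forall>y\<in>carrier G. \<exists>b\<in>carrier B. \<chi> b = y [^]\<^bsub>G\<^esub> r)"

lemma kernel_pow_one:
  assumes "group A" "group_hom A B \<pi>" "z \<in> kernel A B \<pi>"
  shows "z [^]\<^bsub>A\<^esub> card (kernel A B \<pi>) = \<one>\<^bsub>A\<^esub>"
proof -
  interpret h: group_hom A B \<pi> by fact
  let ?H = "kernel A B \<pi>"
  have sg: "subgroup ?H A" by (rule h.subgroup_kernel)
  interpret HG: group "A\<lparr>carrier := ?H\<rparr>" using subgroup.subgroup_is_group[OF sg assms(1)] .
  have "z [^]\<^bsub>A\<lparr>carrier := ?H\<rparr>\<^esub> Coset.order (A\<lparr>carrier := ?H\<rparr>) = \<one>\<^bsub>A\<lparr>carrier := ?H\<rparr>\<^esub>"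
    using assms(3) by (intro HG.pow_order_eq_1) simp
  then show ?thesis by (simp add: Coset.order_def h.G.nat_pow_consistent[symmetric])
qed

lemma lift_good:
  assumes A: "comm_group A" and Bg: "comm_group B" and Gg: "comm_group G"
    and pi: "surj_hom A B \<pi>" and psi: "surj_hom A G \<psi>"
  shows "\<exists>\<chi>. good B G \<chi> (card (kernel A B \<pi>))"
proof -
  interpret A: comm_group A by fact
  interpret B: comm_group B by fact
  interpret G: comm_group G by fact
  let ?m = "card (kernel A B \<pi>)"
  have gh: "group_hom A B \<pi>" using pi by (auto simp: surj_hom_def group_hom_def group_hom_axioms_def A.is_group B.is_group)
  interpret h: group_hom A B \<pi> by fact
  have psih: "\<psi> \<in> hom A G" using psi by (simp add: surj_hom_def)
  have psic: "\<psi> x \<in> carrier G" if "x \<in> carrier A" for x using psih that by (auto simp: hom_def)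
  have psim: "\<psi> (x \<otimes>\<^bsub>A\<^esub> y) = \<psi> x \<otimes>\<^bsub>G\<^esub> \<psi> y" if "x \<in> carrier A" "y \<in> carrier A" for x y
    using psih that by (auto simp: hom_def)
  have key: "\<psi> x [^]\<^bsub>G\<^esub> ?m = \<psi> x' [^]\<^bsub>G\<^esub> ?m"
    if x: "x \<in> carrier A" "x' \<in> carrier A" "\<pi> x = \<pi> x'" for x x'
  proof -
    define z where "z = inv\<^bsub>A\<^esub> x \<otimes>\<^bsub>A\<^esub> x'"
    have zc: "z \<in> carrier A" using x by (simp add: z_def)
    have "\<pi> z = inv\<^bsub>B\<^esub> (\<pi> x) \<otimes>\<^bsub>B\<^esub> \<pi> x'" using x by (simp add: z_def h.hom_inv)
    also have "\<dots> = \<one>\<^bsub>B\<^esub>" using x h.hom_closed by (simp add: B.l_inv)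
    finally have "z \<in> kernel A B \<pi>" using zc by (simp add: kernel_def)
    then have zm: "z [^]\<^bsub>A\<^esub> ?m = \<one>\<^bsub>A\<^esub>" using kernel_pow_one[OF A.is_group gh] by blast
    have "\<psi> z [^]\<^bsub>G\<^esub> ?m = \<psi> (z [^]\<^bsub>A\<^esub> ?m)"
      using zc hom_nat_pow[OF psih zc A.is_group G.is_group] by simp
    also have "\<dots> = \<one>\<^bsub>G\<^esub>" using zm hom_one[OF psih A.is_group G.is_group] by simp
    finally have pz: "\<psi> z [^]\<^bsub>G\<^esub> ?m = \<one>\<^bsub>G\<^esub>" .
    have "x' = x \<otimes>\<^bsub>A\<^esub> z" using x by (simp add: z_def A.m_assoc[symmetric])
    then have "\<psi> x' [^]\<^bsub>G\<^esub> ?m = (\<psi> x \<otimes>\<^bsub>G\<^esub> \<psi> z) [^]\<^bsub>G\<^esub> ?m" using psim x zc by simp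
    also have "\<dots> = \<psi> x [^]\<^bsub>G\<^esub> ?m \<otimes>\<^bsub>G\<^esub> \<psi> z [^]\<^bsub>G\<^esub> ?m" using psic x zc by (simp add: G.nat_pow_distrib)
    also have "\<dots> = \<psi> x [^]\<^bsub>G\<^esub> ?m" using pz psic x by simp
    finally show ?thesis by simp
  qed
  define pre where "pre b = (SOME x. x \<in> carrier A \<and> \<pi> x = b)" for b
  have pre: "pre b \<in> carrier A \<and> \<pi> (pre b) = b" if "b \<in> carrier B" for b
  proof -
    have "b \<in> \<pi> ` carrier A" using pi that by (simp add: surj_hom_def)
    then have "\<exists>x. x \<in> carrier A \<and> \<pi> x = b" by (elim imageE) blast
    then show ?thesis unfolding pre_def by (rule someI_ex)
  qed
  define \<chi> where "\<chi> b = \<psi> (pre b) [^]\<^bsub>G\<^esub> ?m" for b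
  have "\<chi> \<in> hom B G"
  proof (rule homI)
    fix b assume "b \<in> carrier B" then show "\<chi> b \<in> carrier G" using pre psic by (simp add: \<chi>_def)
  next
    fix b1 b2 assume b: "b1 \<in> carrier B" "b2 \<in> carrier B"
    have p12: "pre b1 \<otimes>\<^bsub>A\<^esub> pre b2 \<in> carrier A" using pre b by simp
    have "\<pi> (pre b1 \<otimes>\<^bsub>A\<^esub> pre b2) = b1 \<otimes>\<^bsub>B\<^esub> b2" using pre b by simp
    then have "\<chi> (b1 \<otimes>\<^bsub>B\<^esub> b2) = \<psi> (pre b1 \<otimes>\<^bsub>A\<^esub> pre b2) [^]\<^bsub>G\<^esub> ?m"
      unfolding \<chi>_def using key[OF _ p12] pre[of "b1 \<otimes>\<^bsub>B\<^esub> b2"] b by simp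
    also have "\<dots> = \<chi> b1 \<otimes>\<^bsub>G\<^esub> \<chi> b2"
      unfolding \<chi>_def using pre b psim psic by (simp add: G.nat_pow_distrib)
    finally show "\<chi> (b1 \<otimes>\<^bsub>B\<^esub> b2) = \<chi> b1 \<otimes>\<^bsub>G\<^esub> \<chi> b2" .
  qed
  moreover have "\<exists>b\<in>carrier B. \<chi> b = y [^]\<^bsub>G\<^esub> ?m" if y: "y \<in> carrier G" for y
  proof -
    have "y \<in> \<psi> ` carrier A" using psi y by (simp add: surj_hom_def)
    then obtain x where x: "x \<in> carrier A" "\<psi> x = y" by (elim imageE) blast
    have bc: "\<pi> x \<in> carrier B" using x by simp
    have "\<chi> (\<pi> x) = \<psi> x [^]\<^bsub>G\<^esub> ?m" unfolding \<chi>_def using key[OF _ x(1)] pre[OF bc] by simp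
    then show ?thesis using bc x by blast
  qed
  ultimately show ?thesis unfolding good_def by blast
qed


lemma pow_mult_order:
  assumes "comm_group G" "finite (carrier G)" "y \<in> carrier G" "int (Coset.order G) dvd k"
  shows "y [^]\<^bsub>G\<^esub> (k::int) = \<one>\<^bsub>G\<^esub>"
proof -
  interpret G: comm_group G by fact
  obtain j where k: "k = int (Coset.order G) * j" using assms(4) by (elim dvdE)
  have "y [^]\<^bsub>G\<^esub> int (Coset.order G) = \<one>\<^bsub>G\<^esub>" using G.pow_order_eq_1[OF assms(3)] by (simp add: int_pow_int)
  then show ?thesis using G.int_pow_pow[OF assms(3)] k by (metis G.int_pow_one)
qed

lemma combine:
  assumes Bg: "comm_group B" and Gg: "comm_group G" and fin: "finite (carrier G)"
    and g1: "good B G \<chi>1 r" and g2: "good B G \<chi>2 m"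
  shows "\<exists>\<chi>. good B G \<chi> (gcd r (gcd (Coset.order G) (m ^ Coset.order G)))"
proof -
  interpret B: comm_group B by fact
  interpret G: comm_group G by fact
  let ?g = "Coset.order G"
  let ?t = "gcd r (gcd ?g (m ^ ?g))"
  have gpos: "?g > 0" using fin G.order_gt_0_iff_finite by blast
  obtain u v c c' :: int where uv: "int ?g dvd u * v"
    and X: "int ?g dvd (int r * c * u^2 + int m * c' * v^2 - int ?t)"
    using nt_step[OF gpos, of r m] by blast
  have h1: "\<chi>1 \<in> hom B G" and h2: "\<chi>2 \<in> hom B G" using g1 g2 by (simp_all add: good_def)
  have c1: "\<chi>1 b \<in> carrier G" and c2: "\<chi>2 b \<in> carrier G" if "b \<in> carrier B" for b
    using h1 h2 that by (auto simp: hom_def)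
  have m1: "\<chi>1 (x \<otimes>\<^bsub>B\<^esub> y) = \<chi>1 x \<otimes>\<^bsub>G\<^esub> \<chi>1 y" and m2: "\<chi>2 (x \<otimes>\<^bsub>B\<^esub> y) = \<chi>2 x \<otimes>\<^bsub>G\<^esub> \<chi>2 y"
    if "x \<in> carrier B" "y \<in> carrier B" for x y
    using h1 h2 that by (auto simp: hom_def)
  have p1: "\<chi>1 (x [^]\<^bsub>B\<^esub> (k::int)) = \<chi>1 x [^]\<^bsub>G\<^esub> k" and p2: "\<chi>2 (x [^]\<^bsub>B\<^esub> (k::int)) = \<chi>2 x [^]\<^bsub>G\<^esub> k"
    if "x \<in> carrier B" for x k
    using hom_int_pow[OF h1 that B.is_group G.is_group] hom_int_pow[OF h2 that B.is_group G.is_group] by auto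
  define \<chi> where "\<chi> b = \<chi>1 b [^]\<^bsub>G\<^esub> u \<otimes>\<^bsub>G\<^esub> \<chi>2 b [^]\<^bsub>G\<^esub> v" for b
  have "\<chi> \<in> hom B G"
  proof (rule homI)
    fix b assume "b \<in> carrier B" then show "\<chi> b \<in> carrier G" using c1 c2 by (simp add: \<chi>_def)
  next
    fix x y assume xy: "x \<in> carrier B" "y \<in> carrier B"
    have "\<chi> (x \<otimes>\<^bsub>B\<^esub> y) = (\<chi>1 x [^]\<^bsub>G\<^esub> u \<otimes>\<^bsub>G\<^esub> \<chi>1 y [^]\<^bsub>G\<^esub> u) \<otimes>\<^bsub>G\<^esub> (\<chi>2 x [^]\<^bsub>G\<^esub> v \<otimes>\<^bsub>G\<^esub> \<chi>2 y [^]\<^bsub>G\<^esub> v)"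
      unfolding \<chi>_def using xy m1 m2 c1 c2 by (simp add: G.int_pow_distrib)
    also have "\<dots> = \<chi> x \<otimes>\<^bsub>G\<^esub> \<chi> y" unfolding \<chi>_def using xy c1 c2 by (simp add: G.m_ac)
    finally show "\<chi> (x \<otimes>\<^bsub>B\<^esub> y) = \<chi> x \<otimes>\<^bsub>G\<^esub> \<chi> y" .
  qed
  moreover have "\<exists>b\<in>carrier B. \<chi> b = y [^]\<^bsub>G\<^esub> ?t" if y: "y \<in> carrier G" for y
  proof -
    have yc: "y [^]\<^bsub>G\<^esub> c \<in> carrier G" "y [^]\<^bsub>G\<^esub> c' \<in> carrier G" using y by simp_all
    obtain b1 where b1: "b1 \<in> carrier B" "\<chi>1 b1 = (y [^]\<^bsub>G\<^esub> c) [^]\<^bsub>G\<^esub> r" using g1 yc(1) by (auto simp: good_def)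
    obtain b2 where b2: "b2 \<in> carrier B" "\<chi>2 b2 = (y [^]\<^bsub>G\<^esub> c') [^]\<^bsub>G\<^esub> m" using g2 yc(2) by (auto simp: good_def)
    define s where "s = b1 [^]\<^bsub>B\<^esub> u \<otimes>\<^bsub>B\<^esub> b2 [^]\<^bsub>B\<^esub> v"
    have sc: "s \<in> carrier B" using b1 b2 by (simp add: s_def)
    have e1: "\<chi>1 b1 = y [^]\<^bsub>G\<^esub> (c * int r)" using b1(2) y by (simp add: int_pow_int[symmetric] G.int_pow_pow)
    have e2: "\<chi>2 b2 = y [^]\<^bsub>G\<^esub> (c' * int m)" using b2(2) y by (simp add: int_pow_int[symmetric] G.int_pow_pow)
    have z1: "\<chi>1 b2 [^]\<^bsub>G\<^esub> (v * u) = \<one>\<^bsub>G\<^esub>"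
      by (rule pow_mult_order[OF Gg fin c1[OF b2(1)]]) (use uv in \<open>simp add: mult.commute\<close>)
    have z2: "\<chi>2 b1 [^]\<^bsub>G\<^esub> (u * v) = \<one>\<^bsub>G\<^esub>"
      by (rule pow_mult_order[OF Gg fin c2[OF b1(1)]]) (use uv in simp)
    have "\<chi> s = (\<chi>1 b1 [^]\<^bsub>G\<^esub> u \<otimes>\<^bsub>G\<^esub> \<chi>1 b2 [^]\<^bsub>G\<^esub> v) [^]\<^bsub>G\<^esub> u \<otimes>\<^bsub>G\<^esub>
                (\<chi>2 b1 [^]\<^bsub>G\<^esub> u \<otimes>\<^bsub>G\<^esub> \<chi>2 b2 [^]\<^bsub>G\<^esub> v) [^]\<^bsub>G\<^esub> v"
      unfolding \<chi>_def s_def using b1(1) b2(1) m1 m2 p1 p2 by simp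
    also have "\<dots> = \<chi>1 b1 [^]\<^bsub>G\<^esub> (u * u) \<otimes>\<^bsub>G\<^esub> \<chi>1 b2 [^]\<^bsub>G\<^esub> (v * u) \<otimes>\<^bsub>G\<^esub>
                (\<chi>2 b1 [^]\<^bsub>G\<^esub> (u * v) \<otimes>\<^bsub>G\<^esub> \<chi>2 b2 [^]\<^bsub>G\<^esub> (v * v))"
      using b1(1) b2(1) c1 c2 by (simp add: G.int_pow_distrib G.int_pow_pow)
    also have "\<dots> = \<chi>1 b1 [^]\<^bsub>G\<^esub> (u * u) \<otimes>\<^bsub>G\<^esub> \<chi>2 b2 [^]\<^bsub>G\<^esub> (v * v)"
      using z1 z2 b1(1) b2(1) c1 c2 by simp
    also have "\<dots> = y [^]\<^bsub>G\<^esub> (int r * c * u^2 + int m * c' * v^2)"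
      using e1 e2 y by (simp add: G.int_pow_pow G.int_pow_mult power2_eq_square mult_ac)
    also have "\<dots> = y [^]\<^bsub>G\<^esub> (int ?t + (int r * c * u^2 + int m * c' * v^2 - int ?t))" by simp
    also have "\<dots> = y [^]\<^bsub>G\<^esub> (int ?t) \<otimes>\<^bsub>G\<^esub> y [^]\<^bsub>G\<^esub> (int r * c * u^2 + int m * c' * v^2 - int ?t)"
      using y by (rule G.int_pow_mult)
    also have "\<dots> = y [^]\<^bsub>G\<^esub> ?t" using pow_mult_order[OF Gg fin y X] y by (simp add: int_pow_int)
    finally show ?thesis using sc by blast
  qed
  ultimately show ?thesis unfolding good_def by blast
qed


lemma final_good:
  fixes n :: nat and m :: "nat \<Rightarrow> nat"
  assumes Bg: "comm_group B" and Gg: "comm_group G" and fin: "finite (carrier G)"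
    and hyp: "\<forall>k<n. \<exists>\<chi>. good B G \<chi> (m k)" and gcd1: "Gcd (m ` {..<n}) = 1"
  shows "\<exists>\<chi>. surj_hom B G \<chi>"
proof -
  interpret B: comm_group B by fact
  interpret G: comm_group G by fact
  let ?g = "Coset.order G"
  have gpos: "?g > 0" using fin G.order_gt_0_iff_finite by blast
  have step: "k \<le> n \<Longrightarrow> \<exists>\<chi> r. good B G \<chi> r \<and> r > 0 \<and> (\<forall>p. prime p \<and> p dvd r \<longrightarrow> (\<forall>j<k. p dvd m j))" for k :: nat
  proof (induction k)
    case 0
    have "(\<lambda>b. \<one>\<^bsub>G\<^esub>) \<in> hom B G" by (rule homI) auto
    moreover have "\<exists>b\<in>carrier B. \<one>\<^bsub>G\<^esub> = y [^]\<^bsub>G\<^esub> ?g" if "y \<in> carrier G" for y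
      using G.pow_order_eq_1[OF that] B.one_closed by metis
    ultimately have "good B G (\<lambda>b. \<one>\<^bsub>G\<^esub>) ?g" unfolding good_def by blast
    then show ?case using gpos by blast
  next
    case (Suc k)
    then obtain \<chi> r where IH: "good B G \<chi> r" "r > 0" "\<forall>p. prime p \<and> p dvd r \<longrightarrow> (\<forall>j<k. p dvd m j)" by auto
    have kn: "k < n" using Suc(2) by simp
    obtain \<chi>k where \<chi>k: "good B G \<chi>k (m k)" using hyp kn by blast
    define r' where "r' = gcd r (gcd ?g (m k ^ ?g))"
    obtain \<chi>' where \<chi>': "good B G \<chi>' r'" using combine[OF Bg Gg fin IH(1) \<chi>k] unfolding r'_def by blast
    have "r' > 0" using IH(2) by (simp add: r'_def)
    moreover have "\<forall>j<Suc k. p dvd m j" if p: "prime p" "p dvd r'" for p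
    proof -
      have "p dvd r" using p(2) by (simp add: r'_def)
      then have a: "\<forall>j<k. p dvd m j" using IH(3) p(1) by blast
      have "p dvd m k ^ ?g" using p(2) unfolding r'_def by (meson dvd_trans gcd_dvd2)
      then have "p dvd m k" by (rule prime_dvd_power[OF p(1)])
      then show ?thesis using a less_Suc_eq by auto
    qed
    ultimately show ?case using \<chi>' by blast
  qed
  obtain \<chi> r where fr: "good B G \<chi> r" "r > 0" "\<forall>p. prime p \<and> p dvd r \<longrightarrow> (\<forall>j<n. p dvd m j)"
    using step[of n] by auto
  have r1: "r = 1"
  proof (rule ccontr)
    assume "r \<noteq> 1"
    then obtain p where p: "prime p" "p dvd r" using prime_factor_nat by blast
    then have "\<forall>j<n. p dvd m j" using fr(3) by blast
    then have "p dvd Gcd (m ` {..<n})" by (intro Gcd_greatest) auto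
    then show False using gcd1 p(1) by simp
  qed
  have h: "\<chi> \<in> hom B G" using fr(1) by (simp add: good_def)
  have "\<chi> ` carrier B = carrier G"
  proof
    show "\<chi> ` carrier B \<subseteq> carrier G" using h by (auto simp: hom_def)
    show "carrier G \<subseteq> \<chi> ` carrier B"
    proof
      fix y assume y: "y \<in> carrier G"
      then obtain b where b: "b \<in> carrier B" "\<chi> b = y [^]\<^bsub>G\<^esub> r" using fr(1) by (auto simp: good_def)
      then have "y = \<chi> b" using y r1 by simp
      then show "y \<in> \<chi> ` carrier B" using b(1) by (rule rev_image_eqI[rotated])
    qed
  qed
  then show ?thesis using h unfolding surj_hom_def by blast
qed


hide_const (open) Polynomial.order

theorem mainTheorem6:
  fixes n :: nat and deg :: "nat \<Rightarrow> nat \<Rightarrow> nat"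
  assumes "n \<ge> 1"
    and "strongly_connected n deg"
  shows "(\<forall>i<n. \<exists>h. surj_hom (sandpile_at n deg i) (total_sandpile n deg) h)
       \<and> order (total_sandpile n deg) = Gcd ((\<lambda>i. order (sandpile_at n deg i)) ` {..<n})
       \<and> (\<forall>G :: ('a, 'b) monoid_scheme. comm_group G \<and> finite (carrier G) \<and>
            (\<forall>i<n. \<exists>h. surj_hom (sandpile_at n deg i) G h)
            \<longrightarrow> (\<exists>h. surj_hom (total_sandpile n deg) G h))"
proof -
  define m where "m i = card (kernel (sandpile_at n deg i) (total_sandpile n deg) (pimap n deg i))" for i
  have P1: "\<forall>i<n. \<exists>h. surj_hom (sandpile_at n deg i) (total_sandpile n deg) h"
    using part1 by blast
  obtain \<kappa> where \<kappa>: "\<kappa> \<in> vecs {..<n}" "lap_apply n deg \<kappa> = (\<lambda>k. 0)" "\<forall>d::int. (\<forall>k<n. d dvd \<kappa> k) \<longrightarrow> d dvd 1"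
    using kappa_exists[OF assms(1)] by blast
  have G1: "Gcd (m ` {..<n}) = 1"
  proof -
    define D where "D = Gcd (m ` {..<n})"
    have "int D dvd \<kappa> k" if "k < n" for k
    proof -
      have "D dvd m k" using that by (simp add: D_def)
      then have "int D dvd int (m k)" by simp
      also have "int (m k) dvd \<kappa> k" unfolding m_def by (rule kernel_dvd[OF that \<kappa>(1,2)])
      finally show ?thesis .
    qed
    then have "int D dvd 1" using \<kappa>(3) by blast
    then show ?thesis unfolding D_def[symmetric] by simp
  qed
  have P2: "order (total_sandpile n deg) = Gcd ((\<lambda>i. order (sandpile_at n deg i)) ` {..<n})"
  proof -
    have "(\<lambda>i. order (sandpile_at n deg i)) ` {..<n} = (*) (order (total_sandpile n deg)) ` (m ` {..<n})"
      using order_Si by (auto simp: m_def image_image intro!: image_cong)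
    then show ?thesis using G1 by (simp add: Gcd_mult)
  qed
  have P3: "\<forall>G :: ('a, 'b) monoid_scheme. comm_group G \<and> finite (carrier G) \<and>
            (\<forall>i<n. \<exists>h. surj_hom (sandpile_at n deg i) G h)
            \<longrightarrow> (\<exists>h. surj_hom (total_sandpile n deg) G h)"
  proof (intro allI impI)
    fix G :: "('a, 'b) monoid_scheme"
    assume H: "comm_group G \<and> finite (carrier G) \<and> (\<forall>i<n. \<exists>h. surj_hom (sandpile_at n deg i) G h)"
    have "\<forall>k<n. \<exists>\<chi>. good (total_sandpile n deg) G \<chi> (m k)"
    proof (intro allI impI)
      fix k assume k: "k < n"
      obtain \<psi> where \<psi>: "surj_hom (sandpile_at n deg k) G \<psi>" using H k by blast
      show "\<exists>\<chi>. good (total_sandpile n deg) G \<chi> (m k)"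
        unfolding m_def by (rule lift_good[OF Si_comm S_comm _ part1[OF k] \<psi>]) (use H in blast)
    qed
    then show "\<exists>h. surj_hom (total_sandpile n deg) G h"
      using final_good[OF S_comm _ _ _ G1] H by blast
  qed
  show ?thesis using P1 P2 P3 by blast
qed


end
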